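(* Assume the Lipschitz gradient assumption, $r_1>L_x$, $r_2>L_y$, and the dual K\L{} assumption with exponent $\theta\in(0,1)$. If $(x,y)\in\mathcal X\times\mathcal Y$ is an $\epsilon$-GS, then $x$ is an $\mathcal O(\epsilon^{\min\{1,\frac{1}{2\theta}\}})$-OS, i.e. $\|x^*(x)-x\|\le\mathcal O(\epsilon^{\min\{1,\frac1{2\theta}\}})$, where the constant depends only on the problem data and $r_1,r_2$.
   Context: Let $\mathcal X\subset\mathbb R^n$, $\mathcal Y\subset\mathbb R^d$ be nonempty convex compact sets and $f:\mathbb R^n\times\mathbb R^d\to\mathbb R$ continuously differentiable. Lipschitz gradient assumption: there are $L_x,L_y>0$ such that for all $x,x'\in\mathcal X$, $y,y'\in\mathcal Y$, $\|\nabla_x f(x,y)-\nabla_x f(x',y')\|\le L_x(\|x-x'\|+\|y-y'\|)$ and $\|\nabla_y f(x,y)-\nabla_y f(x',y')\|\le L_y(\|x-x'\|+\|y-y'\|)$. Let $N_{\mathcal X}(x)=\partial\mathbf 1_{\mathcal X}(x)$ denote the normal cone. A point $(x,y)\in\mathcal X\times\mathcal Y$ is an $\epsilon$-game stationary point ($\epsilon$-GS) if $\mathrm{dist}(0,\nabla_xf(x,y)+N_{\mathcal X}(x))\le\epsilon$ and $\mathrm{dist}(0,-\nabla_yf(x,y)+N_{\mathcal Y}(y))\le\epsilon$. For $z\in\mathbb R^n$ let $x^*(z)=\arg\min_{x\in\mathcal X}\max_{y\in\mathcal Y}\{f(x,y)+\frac{r_1}{2}\|x-z\|^2\}$ (equivalently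 the proximal point of $\max_{y\in\mathcal Y}f(\cdot,y)/r_1+\mathbf 1_{\mathcal X}$ at $z$); $z$ is an $\epsilon$-optimization stationary point ($\epsilon$-OS) if $\|x^*(z)-z\|\le\epsilon$. Dual K\L{} assumption: for every $x\in\mathcal X$, $\max_{y\in\mathcal Y}f(x,y)$ is attained and finite, and there exist $\tau>0$, $\theta\in(0,1)$ with $(\max_{y'\in\mathcal Y}f(x,y')-f(x,y))^\theta\le\frac1\tau\mathrm{dist}(0,-\nabla_yf(x,y)+N_{\mathcal Y}(y))$ for all $x\in\mathcal X$, $y\in\mathcal Y$. *)

theory Defs
  imports "HOL-Analysis.Analysis"
begin

definition normal_cone :: "'a::real_inner set \<Rightarrow> 'a \<Rightarrow> 'a set" where
  "normal_cone S x = (if x \<in> S then {v. \<forall>z\<in>S. inner v (z - x) \<le> 0} else {})"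

definition primal_max :: "'b set \<Rightarrow> ('a \<Rightarrow> 'b \<Rightarrow> real) \<Rightarrow> 'a \<Rightarrow> real" where
  "primal_max Y f x = (SUP y\<in>Y. f x y)"

text \<open>eps-game stationary point; gx, gy are the partial gradients of f.\<close>
definition game_stationary ::
  "'a::real_inner set \<Rightarrow> 'b::real_inner set \<Rightarrow> ('a \<Rightarrow> 'b \<Rightarrow> 'a) \<Rightarrow> ('a \<Rightarrow> 'b \<Rightarrow> 'b)
   \<Rightarrow> real \<Rightarrow> 'a \<Rightarrow> 'b \<Rightarrow> bool" where
  "game_stationary X Y gx gy eps x y \<longleftrightarrow>
     x \<in> X \<and> y \<in> Y \<and>
     infdist 0 ((\<lambda>v. gx x y + v) ` normal_cone X x) \<le> eps \<and>
     infdist 0 ((\<lambda>v. - gy x y + v) ` normal_cone Y y) \<le> eps"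

definition prox_point ::
  "'a::real_normed_vector set \<Rightarrow> 'b set \<Rightarrow> ('a \<Rightarrow> 'b \<Rightarrow> real) \<Rightarrow> real \<Rightarrow> 'a \<Rightarrow> 'a" where
  "prox_point X Y f r1 z =
     (THE x. x \<in> X \<and> (\<forall>x'\<in>X. primal_max Y f x + r1 / 2 * (norm (x - z))\<^sup>2
                              \<le> primal_max Y f x' + r1 / 2 * (norm (x' - z))\<^sup>2))"

definition opt_stationary ::
  "'a::real_normed_vector set \<Rightarrow> 'b set \<Rightarrow> ('a \<Rightarrow> 'b \<Rightarrow> real) \<Rightarrow> real \<Rightarrow> real \<Rightarrow> 'a \<Rightarrow> bool" where
  "opt_stationary X Y f r1 eps z \<longleftrightarrow> norm (prox_point X Y f r1 z - z) \<le> eps"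

end

theory Submission
  imports Defs
begin


lemma quad_bound:
  fixes X :: "'a::euclidean_space set" and Y :: "'b::euclidean_space set"
    and f :: "'a \<Rightarrow> 'b \<Rightarrow> real"
    and gx :: "'a \<Rightarrow> 'b \<Rightarrow> 'a" and gy :: "'a \<Rightarrow> 'b \<Rightarrow> 'b"
  assumes cX: "convex X"
    and deriv: "\<And>x y. ((\<lambda>p. f (fst p) (snd p)) has_derivative
                   (\<lambda>h. inner (gx x y) (fst h) + inner (gy x y) (snd h))) (at (x, y))"
    and Lip_x: "\<And>x x' y. x \<in> X \<Longrightarrow> x' \<in> X \<Longrightarrow> y \<in> Y \<Longrightarrow>
                  norm (gx x y - gx x' y) \<le> Lx * (norm (x - x') + norm (y - y))"
    and u: "u \<in> X" and x: "x \<in> X" and y: "y \<in> Y"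
  shows "f x y + inner (gx x y) (u - x) - Lx/2 * (norm (u-x))^2 \<le> f u y"
proof -
  define v where "v = u - x"
  define h where "h t = f (x + t *\<^sub>R v) y" for t
  have hd: "(h has_real_derivative inner (gx (x + t *\<^sub>R v) y) v) (at t)" for t
  proof -
    have p: "((\<lambda>t. (x + t *\<^sub>R v, y)) has_derivative (\<lambda>s. (s *\<^sub>R v, 0))) (at t)"
      by (auto intro!: derivative_eq_intros)
    have "((\<lambda>p. f (fst p) (snd p)) \<circ> (\<lambda>t. (x + t *\<^sub>R v, y)) has_derivative
       (\<lambda>h. inner (gx (x + t *\<^sub>R v) y) (fst h) + inner (gy (x + t *\<^sub>R v) y) (snd h)) \<circ> (\<lambda>s. (s *\<^sub>R v, 0))) (at t)"
      by (rule diff_chain_at[OF p deriv])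
    moreover have "(\<lambda>h. inner (gx (x + t *\<^sub>R v) y) (fst h) + inner (gy (x + t *\<^sub>R v) y) (snd h)) \<circ> (\<lambda>s. (s *\<^sub>R v, 0))
        = (*) (inner (gx (x + t *\<^sub>R v) y) v)"
      by (auto simp: fun_eq_iff)
    ultimately show ?thesis
      unfolding has_field_derivative_def h_def by (simp add: o_def)
  qed
  define k where "k = (\<lambda>t. h t - t * inner (gx x y) v + Lx/2 * t^2 * (norm v)^2)" 
  have kd: "(k has_real_derivative inner (gx (x + t *\<^sub>R v) y) v - inner (gx x y) v + Lx * t * (norm v)^2) (at t)" for t
  proof -
    have "(k has_real_derivative inner (gx (x + t *\<^sub>R v) y) v - 1 * inner (gx x y) v + Lx/2 * (real 2 * t ^ (2 - Suc 0)) * (norm v)^2) (at t)"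
      unfolding k_def
      by (intro DERIV_add DERIV_diff hd DERIV_cmult_right DERIV_cmult DERIV_pow DERIV_ident)
    moreover have "inner (gx (x + t *\<^sub>R v) y) v - 1 * inner (gx x y) v + Lx/2 * (real 2 * t ^ (2 - Suc 0)) * (norm v)^2
       = inner (gx (x + t *\<^sub>R v) y) v - inner (gx x y) v + Lx * t * (norm v)^2" by simp
    ultimately show ?thesis by simp
  qed
  have "k 0 \<le> k 1"
  proof (rule DERIV_nonneg_imp_increasing_open[of 0 1 k])
    show "continuous_on {0..1} k"
      by (rule continuous_at_imp_continuous_on) (blast intro: DERIV_isCont kd)
    fix t :: real assume t: "0 < t" "t < 1"
    have xt: "x + t *\<^sub>R v \<in> X"
    proof -
      have "(1 - t) *\<^sub>R x + t *\<^sub>R u \<in> X"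
        using cX x u t by (intro convexD) auto
      moreover have "(1 - t) *\<^sub>R x + t *\<^sub>R u = x + t *\<^sub>R v"
        by (simp add: v_def algebra_simps)
      ultimately show ?thesis by simp
    qed
    have L: "norm (gx (x + t *\<^sub>R v) y - gx x y) \<le> Lx * (t * norm v)"
      using Lip_x[OF xt x y] t by simp
    have "inner (gx (x + t *\<^sub>R v) y - gx x y) v \<ge> - (norm (gx (x + t *\<^sub>R v) y - gx x y) * norm v)"
      using Cauchy_Schwarz_ineq2[of "gx (x + t *\<^sub>R v) y - gx x y" v] by (simp add: abs_le_iff)
    moreover have "norm (gx (x + t *\<^sub>R v) y - gx x y) * norm v \<le> Lx * (t * norm v) * norm v"
      using L by (simp add: mult_right_mono)
    ultimately have "0 \<le> inner (gx (x + t *\<^sub>R v) y) v - inner (gx x y) v + Lx * t * (norm v)^2"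
      by (simp add: inner_diff_left power2_eq_square algebra_simps)
    then show "\<exists>d. (k has_real_derivative d) (at t) \<and> 0 \<le> d" using kd by blast
  qed simp
  then show ?thesis
    by (simp add: k_def h_def v_def)
qed



lemma infdist_approx:
  fixes S :: "'a::real_normed_vector set"
  assumes "S \<noteq> {}" "infdist 0 S \<le> e" "\<delta> > 0"
  shows "\<exists>s\<in>S. norm s < e + \<delta>"
proof -
  have "infdist 0 S < e + \<delta>" using assms by simp
  then have "(INF s\<in>S. dist 0 s) < e + \<delta>" using infdist_notempty[OF assms(1)] by simp
  moreover have "bdd_below ((dist 0) ` S)" by (rule bdd_belowI[where m=0]) auto
  ultimately obtain s where "s \<in> S" "dist 0 s < e + \<delta>"
    using cINF_less_iff[OF assms(1), of "dist 0"] by auto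
  then show ?thesis by auto
qed

lemma mid_norm:
  fixes a b z :: "'a::real_inner"
  shows "(norm ((1/2) *\<^sub>R (a + b) - z))^2 = ((norm (a - z))^2 + (norm (b - z))^2)/2 - (norm (a - b))^2/4"
  unfolding power2_norm_eq_inner
  by (simp add: inner_simps inner_commute field_simps)



theorem mainTheorem8:
  fixes X :: "'a::euclidean_space set" and Y :: "'b::euclidean_space set"
    and f :: "'a \<Rightarrow> 'b \<Rightarrow> real"
    and gx :: "'a \<Rightarrow> 'b \<Rightarrow> 'a" and gy :: "'a \<Rightarrow> 'b \<Rightarrow> 'b"
    and Lx Ly r1 r2 \<tau> \<theta> :: real
  assumes X: "convex X" "compact X" "X \<noteq> {}"
    and Y: "convex Y" "compact Y" "Y \<noteq> {}"
    and deriv: "\<And>x y. ((\<lambda>p. f (fst p) (snd p)) has_derivative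
                   (\<lambda>h. inner (gx x y) (fst h) + inner (gy x y) (snd h))) (at (x, y))"
    and cont_gx: "continuous_on UNIV (\<lambda>p. gx (fst p) (snd p))"
    and cont_gy: "continuous_on UNIV (\<lambda>p. gy (fst p) (snd p))"
    and Lpos: "Lx > 0" "Ly > 0"
    and Lip_x: "\<And>x x' y y'. x \<in> X \<Longrightarrow> x' \<in> X \<Longrightarrow> y \<in> Y \<Longrightarrow> y' \<in> Y \<Longrightarrow>
                  norm (gx x y - gx x' y') \<le> Lx * (norm (x - x') + norm (y - y'))"
    and Lip_y: "\<And>x x' y y'. x \<in> X \<Longrightarrow> x' \<in> X \<Longrightarrow> y \<in> Y \<Longrightarrow> y' \<in> Y \<Longrightarrow>
                  norm (gy x y - gy x' y') \<le> Ly * (norm (x - x') + norm (y - y'))"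
    and r1: "r1 > Lx" and r2: "r2 > Ly"
    and tau: "\<tau> > 0" and theta: "0 < \<theta>" "\<theta> < 1"
    and max_att: "\<And>x. x \<in> X \<Longrightarrow> \<exists>y\<in>Y. \<forall>y'\<in>Y. f x y' \<le> f x y"
    and KL: "\<And>x y. x \<in> X \<Longrightarrow> y \<in> Y \<Longrightarrow>
               (primal_max Y f x - f x y) powr \<theta>
                 \<le> (1 / \<tau>) * infdist 0 ((\<lambda>v. - gy x y + v) ` normal_cone Y y)"
  shows "\<exists>C>0. \<forall>\<epsilon>>0. \<forall>x y. game_stationary X Y gx gy \<epsilon> x y \<longrightarrow>
           opt_stationary X Y f r1 (C * \<epsilon> powr (min 1 (1 / (2 * \<theta>)))) x"
proof -
  define P where "P = primal_max Y f"
  have QB: "f x y + inner (gx x y) (u - x) - Lx/2 * (norm (u-x))^2 \<le> f u y"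
    if "u \<in> X" "x \<in> X" "y \<in> Y" for u x y
  proof -
    have Lx': "\<And>x x' y. x \<in> X \<Longrightarrow> x' \<in> X \<Longrightarrow> y \<in> Y \<Longrightarrow>
                  norm (gx x y - gx x' y) \<le> Lx * (norm (x - x') + norm (y - y))"
      using Lip_x by blast
    show ?thesis by (rule quad_bound[where Y=Y, OF X(1) deriv Lx' that])
  qed
  have Pmax: "\<exists>y\<in>Y. P x = f x y" if xX: "x \<in> X" for x
  proof -
    obtain y where y: "y \<in> Y" "\<forall>y'\<in>Y. f x y' \<le> f x y" using max_att[OF xX] by blast
    have "Sup (f x ` Y) = f x y" by (rule cSup_eq_maximum) (use y in auto)
    then show ?thesis using y by (auto simp: P_def primal_max_def)
  qed
  have Pge: "f x y \<le> P x" if xy: "x \<in> X" "y \<in> Y" for x y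
  proof -
    obtain y0 where y0: "y0 \<in> Y" "\<forall>y'\<in>Y. f x y' \<le> f x y0" using max_att[OF xy(1)] by blast
    have "Sup (f x ` Y) = f x y0" by (rule cSup_eq_maximum) (use y0 in auto)
    then show ?thesis using y0 xy by (auto simp: P_def primal_max_def)
  qed
  obtain B where B: "\<forall>x\<in>X. norm x \<le> B" using compact_imp_bounded[OF X(2)] bounded_iff by blast
  obtain BY where BY: "\<forall>y\<in>Y. norm y \<le> BY" using compact_imp_bounded[OF Y(2)] bounded_iff by blast
  obtain x0 where x0: "x0 \<in> X" using X(3) by blast
  obtain y0 where y0: "y0 \<in> Y" using Y(3) by blast
  have B0: "B \<ge> 0" using B x0 norm_ge_zero order_trans by blast
  have BY0: "BY \<ge> 0" using BY y0 norm_ge_zero order_trans by blast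
  have dX: "norm (u - x) \<le> 2 * B" if "u \<in> X" "x \<in> X" for u x
  proof -
    have "norm u \<le> B" "norm x \<le> B" using B that by auto
    then show ?thesis using norm_triangle_ineq4[of u x] by linarith
  qed
  have dY: "norm (u - x) \<le> 2 * BY" if "u \<in> Y" "x \<in> Y" for u x
  proof -
    have "norm u \<le> BY" "norm x \<le> BY" using BY that by auto
    then show ?thesis using norm_triangle_ineq4[of u x] by linarith
  qed
  define M where "M = norm (gx x0 y0) + Lx * (2 * B + 2 * BY)"
  have M0: "M \<ge> 0" unfolding M_def using B0 BY0 Lpos by simp
  have gM: "norm (gx x y) \<le> M" if "x \<in> X" "y \<in> Y" for x y
  proof -
    have "norm (gx x y) \<le> norm (gx x0 y0) + norm (gx x y - gx x0 y0)"
      by (metis add.commute diff_add_cancel norm_triangle_ineq)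
    also have "norm (gx x y - gx x0 y0) \<le> Lx * (norm (x - x0) + norm (y - y0))"
      using Lip_x[OF that(1) x0 that(2) y0] .
    also have "\<dots> \<le> Lx * (2 * B + 2 * BY)"
      using dX[OF that(1) x0] dY[OF that(2) y0] Lpos by (intro mult_left_mono) auto
    finally show ?thesis unfolding M_def by simp
  qed
  have fdiff: "f u y - f x y \<le> M * norm (u - x) + Lx/2 * (norm (u - x))^2"
    if "u \<in> X" "x \<in> X" "y \<in> Y" for u x y
  proof -
    have q: "f u y + inner (gx u y) (x - u) - Lx/2 * (norm (x-u))^2 \<le> f x y"
      using QB[OF that(2,1,3)] .
    have "- inner (gx u y) (x - u) \<le> norm (gx u y) * norm (x - u)"
      using Cauchy_Schwarz_ineq2[of "gx u y" "x - u"] by (simp add: abs_le_iff)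
    also have "\<dots> \<le> M * norm (x - u)" using gM[OF that(1,3)] by (simp add: mult_right_mono)
    finally show ?thesis using q by (simp add: norm_minus_commute)
  qed
  have Pdiff: "P u - P x \<le> M * norm (u - x) + Lx/2 * (norm (u - x))^2"
    if ux: "u \<in> X" "x \<in> X" for u x
  proof -
    obtain yu where yu: "yu \<in> Y" "P u = f u yu" using Pmax[OF ux(1)] by blast
    show ?thesis using fdiff[OF ux yu(1)] Pge[OF ux(2) yu(1)] yu(2) by linarith
  qed
  have Pcont: "continuous_on X P"
    unfolding continuous_on_iff
  proof (intro ballI allI impI)
    fix x and e :: real assume x: "x \<in> X" and e: "e > 0"
    define \<delta> where "\<delta> = min 1 (e / (M + Lx + 1))"
    have \<delta>: "\<delta> > 0" using e M0 Lpos by (simp add: \<delta>_def)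
    show "\<exists>\<delta>>0. \<forall>x'\<in>X. dist x' x < \<delta> \<longrightarrow> dist (P x') (P x) < e"
    proof (intro exI[of _ \<delta>] conjI ballI impI \<delta>)
      fix u assume u: "u \<in> X" and du: "dist u x < \<delta>"
      define d where "d = norm (u - x)"
      have d: "0 \<le> d" "d < 1" "d < e / (M + Lx + 1)"
        using du by (auto simp: d_def dist_norm \<delta>_def)
      have "d * d \<le> d" using d by (simp add: mult_left_le)
      then have "Lx * (d * d) \<le> Lx * d" using Lpos by (intro mult_left_mono) auto
      moreover have "Lx * d \<ge> 0" using Lpos d by simp
      moreover have "(M + Lx + 1) * d = M * d + Lx * d + d" by (simp add: algebra_simps)
      moreover have "Lx/2 * d^2 = (Lx * (d * d)) / 2" by (simp add: power2_eq_square)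
      ultimately have "M * d + Lx/2 * d^2 \<le> (M + Lx + 1) * d"
        using Lpos M0 d by linarith
      also have "\<dots> < e" using d M0 Lpos by (simp add: field_simps)
      finally have bnd: "M * d + Lx/2 * d^2 < e" .
      have "P u - P x < e" using Pdiff[OF u x] bnd by (simp add: d_def)
      moreover have "P x - P u < e" using Pdiff[OF x u] bnd by (simp add: d_def norm_minus_commute)
      ultimately show "dist (P u) (P x) < e" by (simp add: dist_real_def abs_less_iff)
    qed
  qed
  define \<Psi> where "\<Psi> z u = P u + r1 / 2 * (norm (u - z))^2" for z u
  have uniq: "a = b" if "a \<in> X" "b \<in> X" "\<forall>x'\<in>X. \<Psi> z a \<le> \<Psi> z x'" "\<forall>x'\<in>X. \<Psi> z b \<le> \<Psi> z x'" for a b z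
  proof (rule ccontr)
    assume ne: "a \<noteq> b"
    define c where "c = (1/2) *\<^sub>R (a + b)"
    have cX: "c \<in> X"
    proof -
      have "(1 - 1/2) *\<^sub>R a + (1/2) *\<^sub>R b \<in> X" using X(1) that(1,2) by (intro convexD) auto
      then show ?thesis by (simp add: c_def scaleR_add_right)
    qed
    obtain yc where yc: "yc \<in> Y" "P c = f c yc" using Pmax[OF cX] by blast
    have half: "(1/2) *\<^sub>R v + (1/2) *\<^sub>R v = v" for v :: 'a by (simp flip: scaleR_add_left)
    have ac: "a - c = (1/2) *\<^sub>R (a - b)" by (simp add: c_def algebra_simps half)
    have bc: "b - c = - ((1/2) *\<^sub>R (a - b))" by (simp add: c_def algebra_simps half)
    have qa: "f c yc + inner (gx c yc) (a - c) - Lx/2 * (norm (a-c))^2 \<le> P a"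
      using QB[OF that(1) cX yc(1)] Pge[OF that(1) yc(1)] by linarith
    have qb: "f c yc + inner (gx c yc) (b - c) - Lx/2 * (norm (b-c))^2 \<le> P b"
      using QB[OF that(2) cX yc(1)] Pge[OF that(2) yc(1)] by linarith
    have na: "(norm (a-c))^2 = (norm (a-b))^2 / 4" unfolding ac by (simp add: power2_eq_square)
    have nb: "(norm (b-c))^2 = (norm (a-b))^2 / 4" unfolding bc by (simp add: power2_eq_square)
    have ib: "inner (gx c yc) (b - c) = - inner (gx c yc) (a - c)" unfolding ac bc by simp
    have na': "Lx/2 * (norm (a-c))^2 = Lx/8 * (norm (a-b))^2" using na by simp
    have nb': "Lx/2 * (norm (b-c))^2 = Lx/8 * (norm (a-b))^2" using nb by simp
    have Pc: "2 * P c \<le> P a + P b + Lx/4 * (norm (a-b))^2"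
      using qa qb na' nb' ib yc(2) by linarith
    have mn: "(norm (c - z))^2 = ((norm (a - z))^2 + (norm (b - z))^2)/2 - (norm (a - b))^2/4"
      unfolding c_def by (rule mid_norm)
    have pos: "(norm (a - b))^2 > 0" using ne by simp
    have "2 * \<Psi> z c \<le> \<Psi> z a + \<Psi> z b + (Lx - r1)/4 * (norm (a-b))^2"
    proof -
      have "r1/2 * (norm (c - z))^2 = r1/2 * (((norm (a - z))^2 + (norm (b - z))^2)/2 - (norm (a - b))^2/4)"
        using mn by simp
      also have "\<dots> = r1/4 * (norm (a - z))^2 + r1/4 * (norm (b - z))^2 - r1/8 * (norm (a - b))^2"
        by (simp add: algebra_simps)
      finally have mr: "r1/2 * (norm (c - z))^2 = r1/4 * (norm (a - z))^2 + r1/4 * (norm (b - z))^2 - r1/8 * (norm (a - b))^2" .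
      have "(Lx - r1)/4 * (norm (a-b))^2 = Lx/4 * (norm (a-b))^2 - r1/4 * (norm (a-b))^2"
        by (simp add: field_simps)
      have mr': "r1 * (norm (c - z))^2 = r1 * (norm (a - z))^2 / 2 + r1 * (norm (b - z))^2 / 2 - r1 * (norm (a - b))^2 / 4"
        using mr by (simp add: field_simps)
      have Pc': "2 * P c \<le> P a + P b + Lx * (norm (a-b))^2 / 4" using Pc by simp
      have G: "2 * P c + r1 * (norm (c - z))^2 \<le> P a + P b + r1 * (norm (a - z))^2 / 2 + r1 * (norm (b - z))^2 / 2
                + Lx * (norm (a-b))^2 / 4 - r1 * (norm (a - b))^2 / 4"
        using mr' Pc' by linarith
      show ?thesis using G unfolding \<Psi>_def by (simp add: field_simps)
    qed
    moreover have "(Lx - r1)/4 * (norm (a-b))^2 < 0" using pos r1 by (simp add: mult_neg_pos)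
    moreover have "\<Psi> z a \<le> \<Psi> z c" "\<Psi> z b \<le> \<Psi> z c" using that(3,4) cX by auto
    ultimately show False by linarith
  qed
  have prox: "prox_point X Y f r1 z \<in> X \<and> (\<forall>x'\<in>X. \<Psi> z (prox_point X Y f r1 z) \<le> \<Psi> z x')" for z
  proof -
    have "continuous_on X (\<Psi> z)" unfolding \<Psi>_def
      by (intro continuous_intros Pcont)
    then obtain a where a: "a \<in> X" "\<forall>x'\<in>X. \<Psi> z a \<le> \<Psi> z x'"
      using continuous_attains_inf[OF X(2,3)] by blast
    have ex1: "\<exists>!x. x \<in> X \<and> (\<forall>x'\<in>X. \<Psi> z x \<le> \<Psi> z x')"
      using a uniq by blast
    show ?thesis
      using theI'[OF ex1] unfolding prox_point_def \<Psi>_def P_def by simp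
  qed
  define \<mu> where "\<mu> = r1 - Lx"
  have mu: "\<mu> > 0" using r1 by (simp add: \<mu>_def)
  define q where "q = 1 / (2 * \<theta>)"
  have q: "q > 0" using theta by (simp add: q_def)
  define m where "m = min 1 q"
  define c1 where "c1 = 4 / \<mu>"
  define c2 where "c2 = 2 / (sqrt \<mu> * \<tau> powr q)"
  have c1: "c1 > 0" using mu by (simp add: c1_def)
  have c2: "c2 > 0" using mu tau by (simp add: c2_def)
  define C where "C = 2 * B + c1 + c2 + 1"
  show ?thesis unfolding m_def[symmetric] q_def[symmetric]
  proof (intro exI[of _ C] conjI allI impI)
    show "C > 0" using B0 c1 c2 by (simp add: C_def)
    fix \<epsilon> :: real and x y
    assume e: "\<epsilon> > 0" and gs: "game_stationary X Y gx gy \<epsilon> x y"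
    have x: "x \<in> X" and y: "y \<in> Y"
      and I1: "infdist 0 ((\<lambda>v. gx x y + v) ` normal_cone X x) \<le> \<epsilon>"
      and I2: "infdist 0 ((\<lambda>v. - gy x y + v) ` normal_cone Y y) \<le> \<epsilon>"
      using gs by (auto simp: game_stationary_def)
    define xs where "xs = prox_point X Y f r1 x"
    define d where "d = norm (xs - x)"
    have d0: "d \<ge> 0" by (simp add: d_def)
    have xsX: "xs \<in> X" and xsmin: "\<Psi> x xs \<le> \<Psi> x x"
      using prox[of x] x by (auto simp: xs_def)
    have m1: "P xs + r1/2 * d^2 \<le> P x" using xsmin by (simp add: \<Psi>_def d_def)
    have m2: "f x y + inner (gx x y) (xs - x) - Lx/2 * d^2 \<le> P xs"
      using QB[OF xsX x y] Pge[OF xsX y] by (simp add: d_def)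
    have inr: "- (\<epsilon> * d) \<le> inner (gx x y) (xs - x)"
    proof (rule field_le_epsilon)
      fix t :: real assume t: "t > 0"
      define \<delta> where "\<delta> = t / (d + 1)"
      have \<delta>: "\<delta> > 0" using t d0 by (simp add: \<delta>_def)
      have "0 \<in> normal_cone X x" using x by (simp add: normal_cone_def)
      then have ne: "(\<lambda>v. gx x y + v) ` normal_cone X x \<noteq> {}" by blast
      obtain s where sS: "s \<in> (\<lambda>v. gx x y + v) ` normal_cone X x" and sn: "norm s < \<epsilon> + \<delta>"
        using infdist_approx[OF ne I1 \<delta>] by blast
      then obtain v where v: "v \<in> normal_cone X x" and sv: "s = gx x y + v" by blast
      have iv: "inner v (xs - x) \<le> 0" using v xsX x by (simp add: normal_cone_def)
      have "- (norm s * d) \<le> inner s (xs - x)"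
        using Cauchy_Schwarz_ineq2[of s "xs - x"] by (simp add: abs_le_iff d_def)
      moreover have "norm s * d \<le> (\<epsilon> + \<delta>) * d" using sn d0 by (simp add: mult_right_mono)
      moreover have "\<delta> * d \<le> t"
      proof -
        have "\<delta> * d = t * (d / (d + 1))" by (simp add: \<delta>_def)
        also have "\<dots> \<le> t * 1" using t d0 by (intro mult_left_mono) auto
        finally show ?thesis by simp
      qed
      moreover have "inner (gx x y) (xs - x) = inner s (xs - x) - inner v (xs - x)"
        by (simp add: sv inner_add_left)
      ultimately show "- (\<epsilon> * d) \<le> inner (gx x y) (xs - x) + t"
        using iv by (simp add: algebra_simps)
    qed
    define A where "A = P x - f x y"
    have A0: "A \<ge> 0" using Pge[OF x y] by (simp add: A_def)
    have KA: "A powr \<theta> \<le> \<epsilon> / \<tau>"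
    proof -
      have "A powr \<theta> \<le> (1 / \<tau>) * infdist 0 ((\<lambda>v. - gy x y + v) ` normal_cone Y y)"
        using KL[OF x y] by (simp add: A_def P_def)
      also have "\<dots> \<le> (1 / \<tau>) * \<epsilon>" using I2 tau by (intro mult_left_mono) auto
      finally show ?thesis by simp
    qed
    define K where "K = (\<epsilon> / \<tau>) powr q"
    have K0: "K \<ge> 0" by (simp add: K_def)
    have AK: "A \<le> K^2"
    proof -
      have "A = (A powr \<theta>) powr (1 / \<theta>)" using A0 theta by (simp add: powr_powr)
      also have "\<dots> \<le> (\<epsilon> / \<tau>) powr (1 / \<theta>)" using KA theta by (intro powr_mono2) auto
      also have "\<dots> = K^2"
      proof -
        have "K^2 = (\<epsilon> / \<tau>) powr (q + q)" by (simp only: K_def power2_eq_square powr_add)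
        moreover have "q + q = 1 / \<theta>" by (simp add: q_def)
        ultimately show ?thesis by simp
      qed
      finally show ?thesis .
    qed
    have key: "\<mu>/2 * d^2 \<le> A + \<epsilon> * d"
    proof -
      have "\<mu>/2 * d^2 = r1/2 * d^2 - Lx/2 * d^2" by (simp add: \<mu>_def field_simps)
      then show ?thesis using m1 m2 inr by (simp add: A_def)
    qed
    have dbound: "d \<le> c1 * \<epsilon> + c2 * (\<epsilon> powr q)"
    proof (cases "A \<le> \<epsilon> * d")
      case True
      then have "\<mu>/2 * d^2 \<le> 2 * \<epsilon> * d" using key by simp
      then have "d * (\<mu>/2 * d) \<le> d * (2 * \<epsilon>)" by (simp add: power2_eq_square algebra_simps)
      then have "\<mu>/2 * d \<le> 2 * \<epsilon> \<or> d = 0" using d0 by (auto simp: mult_le_cancel_left)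
      then have "d \<le> c1 * \<epsilon>" using mu e by (auto simp: c1_def field_simps)
      moreover have "c2 * (\<epsilon> powr q) \<ge> 0" using c2 by simp
      ultimately show ?thesis by simp
    next
      case False
      then have "\<mu>/2 * d^2 < 2 * K^2" using key AK by simp
      then have "d^2 < (2 * K / sqrt \<mu>)^2" using mu by (simp add: field_simps power2_eq_square)
      then have "d < 2 * K / sqrt \<mu>" by (rule power2_less_imp_less) (use K0 mu in simp)
      moreover have "2 * K / sqrt \<mu> = c2 * (\<epsilon> powr q)"
        by (simp add: K_def c2_def powr_divide)
      moreover have "c1 * \<epsilon> \<ge> 0" using c1 e by simp
      ultimately show ?thesis by simp
    qed
    have d2B: "d \<le> 2 * B" using dX[OF xsX x] by (simp add: d_def)
    have m0: "m \<ge> 0" "m \<le> 1" "m \<le> q" using q by (auto simp: m_def)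
    define E where "E = \<epsilon> powr m"
    have E0: "E \<ge> 0" by (simp add: E_def)
    have "d \<le> C * E"
    proof (cases "\<epsilon> \<ge> 1")
      case True
      then have "1 \<le> E" unfolding E_def using m0 by (intro ge_one_powr_ge_zero) auto
      then have "2 * B \<le> 2 * B * E" using B0 by (simp add: mult_le_cancel_left1)
      moreover have "C * E = 2 * B * E + (c1 + c2 + 1) * E" by (simp add: C_def algebra_simps)
      moreover have "(c1 + c2 + 1) * E \<ge> 0" using c1 c2 E0 by simp
      ultimately show ?thesis using d2B by linarith
    next
      case False
      have "\<epsilon> \<le> E"
      proof -
        have "\<epsilon> powr 1 \<le> \<epsilon> powr m" using m0 e False by (intro powr_mono') auto
        then show ?thesis using e by (simp add: E_def)
      qed
      moreover have "\<epsilon> powr q \<le> E" unfolding E_def using m0 e False by (intro powr_mono') auto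
      ultimately have "c1 * \<epsilon> + c2 * (\<epsilon> powr q) \<le> c1 * E + c2 * E"
        using c1 c2 by (intro add_mono mult_left_mono) auto
      moreover have "C * E = c1 * E + c2 * E + (2 * B + 1) * E" by (simp add: C_def algebra_simps)
      moreover have "(2 * B + 1) * E \<ge> 0" using B0 E0 by simp
      ultimately show ?thesis using dbound by linarith
    qed
    then show "opt_stationary X Y f r1 (C * \<epsilon> powr m) x"
      by (simp add: opt_stationary_def xs_def d_def E_def)
  qed
qed

end
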